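(* Let $\mathcal{D}$ be a clocked basic action theory and $\sigma$ a (ground) situation. Then the clock valuation $\nu_\sigma$ of $\sigma$ exists and is unique, i.e., for every ground situation-suppressed clock term $\omega$ there is exactly one $\tau\in\mathbb{R}$ with $\mathcal{D}\models\omega[\sigma]=\tau$.
   Context: Situation calculus setting: sorts action, situation, object and time (the real numbers with standard operations and relations); $S_0$ initial situation; $\mathit{do}(a,s)$ the successor situation. Fluents are relation or function symbols with last argument a situation and other arguments objects; there are finitely many fluents, finitely many action types and a finite set $\mathcal{O}$ of object constants (with unique names and domain closure). A formula is uniform in $s$ if it mentions no situation term other than $s$ and does not mention $\mathit{Poss}$. A basic action theory (BAT) is $\mathcal{D} = \mathcal{D}_0 \cup \mathcal{D}_{poss} \cup \mathcal{D}_{ssa} \cup \mathcal{D}_{ca} \cup \mathcal{D}_{co} \cup \Sigma$: initial description $\mathcal{D}_0$ (sentences uniform in $S_0$, complete information), precondition axioms, successor state axioms (one per fluent), domain closure and unique name axioms for actions and objects, and foundational axioms $\Sigma$. A clock comparison is a formula $f(\vec x,s)\bowtie v$ or $v\bowtie v'$ with $f$ a functional fluent, $v,v'\in\mathbb{N}$, $\bowtie\in\{<,\leq,=,\geq,>\}$. A formula is clocked if every atomic subformula mentioning a term of sort time is a clock comparison, and time-independent if it mentions no term of sort time. A BAT is clocked if there is a distinguished action type $\mathit{wait}(t)$ with $t$ of sort time (other action types have no time argument) and: (1) every functional fluent takes values of sort time; (2) $\mathcal{D}_0$ contains $f(\vec o)=0$ (at $S_0$) for every functional fluent $f$; (3)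 every functional fluent $f$ has a successor state axiom $f(\vec o,\mathit{do}(a,s))=y \equiv \exists t\,(a=\mathit{wait}(t)\wedge y=f(\vec o,s)+t) \vee (\neg\exists t\, a=\mathit{wait}(t)) \wedge (\phi_f(\vec o,a,s)\wedge y=0 \vee \neg\phi_f(\vec o,a,s)\wedge y=f(\vec o,s))$ with $\phi_f$ time-independent and uniform in $s$; (4) every relational fluent has a successor state axiom $R(\vec o,\mathit{do}(a,s))\equiv\phi_R(\vec o,a,s)$ with $\phi_R$ clocked and uniform in $s$; (5) every precondition axiom has a clocked right-hand side uniform in $s$; (6) $\mathit{Poss}(\mathit{wait}(t),s)\equiv\top$. Functional fluents are called clocks; $\mathcal{C}$ is the set of ground situation-suppressed clock terms. The clock valuation of a situation $\sigma$ is the function $\nu_\sigma:\mathcal{C}\to\mathbb{R}_{\geq0}$ with $\nu_\sigma(\omega)=\tau$ iff $\mathcal{D}\models\omega[\sigma]=\tau$. *)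

theory Defs
  imports Main "HOL.Real"
begin

text \<open>Ground actions: a non-wait action type applied to object arguments, or wait(t).
  Unique names and domain closure for actions are given by the datatype.\<close>
datatype ('a, 'o) action = Act 'a "'o list" | Wait real

text \<open>Situations: S0 and do(a,s). The foundational axioms Sigma make the situation
  domain of every model the tree of finite action sequences.\<close>
datatype ('a, 'o) sit = S0 | Do "('a, 'o) action" "('a, 'o) sit"

section \<open>Syntax of formulas uniform in s (situation argument suppressed, no Poss)\<close>

datatype 'o otm = OV nat | OC 'o

datatype ('f, 'o) ttm = TV nat | TNum real | TPlus "('f, 'o) ttm" "('f, 'o) ttm"
  | TTimes "('f, 'o) ttm" "('f, 'o) ttm" | TUminus "('f, 'o) ttm"
  | TClock 'f "'o otm list"

datatype ('a, 'f, 'o) atm = AV nat | AAct 'a "'o otm list" | AWait "('f, 'o) ttm"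

datatype ('r, 'f, 'a, 'o) fml =
    OEq "'o otm" "'o otm"
  | AEq "('a, 'f, 'o) atm" "('a, 'f, 'o) atm"
  | TEq "('f, 'o) ttm" "('f, 'o) ttm"
  | TLess "('f, 'o) ttm" "('f, 'o) ttm"
  | TLeq "('f, 'o) ttm" "('f, 'o) ttm"
  | Rel 'r "'o otm list"
  | Neg "('r, 'f, 'a, 'o) fml"
  | Conj "('r, 'f, 'a, 'o) fml" "('r, 'f, 'a, 'o) fml"
  | ExO nat "('r, 'f, 'a, 'o) fml"
  | ExA nat "('r, 'f, 'a, 'o) fml"
  | ExT nat "('r, 'f, 'a, 'o) fml"

datatype var = VO nat | VAc nat | VTi nat

fun fvo :: "'o otm \<Rightarrow> var set" where
  "fvo (OV i) = {VO i}"
| "fvo (OC c) = {}"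

fun fvt :: "('f, 'o) ttm \<Rightarrow> var set" where
  "fvt (TV i) = {VTi i}"
| "fvt (TNum r) = {}"
| "fvt (TPlus x y) = fvt x \<union> fvt y"
| "fvt (TTimes x y) = fvt x \<union> fvt y"
| "fvt (TUminus x) = fvt x"
| "fvt (TClock f xs) = (\<Union>x\<in>set xs. fvo x)"

fun fva :: "('a, 'f, 'o) atm \<Rightarrow> var set" where
  "fva (AV i) = {VAc i}"
| "fva (AAct A xs) = (\<Union>x\<in>set xs. fvo x)"
| "fva (AWait t) = fvt t"

fun fv :: "('r, 'f, 'a, 'o) fml \<Rightarrow> var set" where
  "fv (OEq x y) = fvo x \<union> fvo y"
| "fv (AEq x y) = fva x \<union> fva y"
| "fv (TEq x y) = fvt x \<union> fvt y"
| "fv (TLess x y) = fvt x \<union> fvt y"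
| "fv (TLeq x y) = fvt x \<union> fvt y"
| "fv (Rel R xs) = (\<Union>x\<in>set xs. fvo x)"
| "fv (Neg p) = fv p"
| "fv (Conj p q) = fv p \<union> fv q"
| "fv (ExO i p) = fv p - {VO i}"
| "fv (ExA i p) = fv p - {VAc i}"
| "fv (ExT i p) = fv p - {VTi i}"

section \<open>Basic action theories (the axiom schemata are fixed by the clocked format)\<close>

record ('r, 'f, 'a, 'o) bat =
  rar :: "'r \<Rightarrow> nat"
  far :: "'f \<Rightarrow> nat"     \<comment> \<open>arity (object arguments) of functional fluents (clocks)\<close>
  aar :: "'a \<Rightarrow> nat"
  D0 :: "('r, 'f, 'a, 'o) fml set"   \<comment> \<open>initial sentences, evaluated at S0\<close>
  pre :: "'a \<Rightarrow> ('r, 'f, 'a, 'o) fml"  \<comment> \<open>Poss(A(x_0..x_{n-1}),s) == pre A (object vars 0..n-1)\<close>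
  ssaR :: "'r \<Rightarrow> ('r, 'f, 'a, 'o) fml" \<comment> \<open>phi_R(x_0..x_{k-1}, a, s); a is action var 0\<close>
  phiF :: "'f \<Rightarrow> ('r, 'f, 'a, 'o) fml" \<comment> \<open>phi_f(x_0..x_{k-1}, a, s); a is action var 0\<close>

fun wf_act :: "('a \<Rightarrow> nat) \<Rightarrow> ('a, 'o) action \<Rightarrow> bool" where
  "wf_act ar (Act A os) = (length os = ar A)"
| "wf_act ar (Wait t) = True"

fun wf_sit :: "('a \<Rightarrow> nat) \<Rightarrow> ('a, 'o) sit \<Rightarrow> bool" where
  "wf_sit ar S0 = True"
| "wf_sit ar (Do a s) = (wf_act ar a \<and> wf_sit ar s)"

fun wf_t :: "('r, 'f, 'a, 'o, 'z) bat_scheme \<Rightarrow> ('f, 'o) ttm \<Rightarrow> bool" where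
  "wf_t D (TPlus x y) = (wf_t D x \<and> wf_t D y)"
| "wf_t D (TTimes x y) = (wf_t D x \<and> wf_t D y)"
| "wf_t D (TUminus x) = wf_t D x"
| "wf_t D (TClock f xs) = (length xs = far D f)"
| "wf_t D _ = True"

fun wf_a :: "('r, 'f, 'a, 'o, 'z) bat_scheme \<Rightarrow> ('a, 'f, 'o) atm \<Rightarrow> bool" where
  "wf_a D (AAct A xs) = (length xs = aar D A)"
| "wf_a D (AWait t) = wf_t D t"
| "wf_a D (AV i) = True"

fun wf_f :: "('r, 'f, 'a, 'o, 'z) bat_scheme \<Rightarrow> ('r, 'f, 'a, 'o) fml \<Rightarrow> bool" where
  "wf_f D (AEq x y) = (wf_a D x \<and> wf_a D y)"
| "wf_f D (TEq x y) = (wf_t D x \<and> wf_t D y)"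
| "wf_f D (TLess x y) = (wf_t D x \<and> wf_t D y)"
| "wf_f D (TLeq x y) = (wf_t D x \<and> wf_t D y)"
| "wf_f D (Rel R xs) = (length xs = rar D R)"
| "wf_f D (Neg p) = wf_f D p"
| "wf_f D (Conj p q) = (wf_f D p \<and> wf_f D q)"
| "wf_f D (ExO i p) = wf_f D p"
| "wf_f D (ExA i p) = wf_f D p"
| "wf_f D (ExT i p) = wf_f D p"
| "wf_f D (OEq x y) = True"

definition is_nat_const :: "('f, 'o) ttm \<Rightarrow> bool" where
  "is_nat_const t \<longleftrightarrow> (\<exists>n::nat. t = TNum (real n))"

fun is_clock_term :: "('f, 'o) ttm \<Rightarrow> bool" where
  "is_clock_term (TClock f xs) = True"
| "is_clock_term _ = False"

text \<open>Operands of a clock comparison f(x,s) \<bowtie> v or v \<bowtie> v' (the relations \<ge>, > are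
  TLeq, TLess with swapped operands, so both operand orders are admitted).\<close>
definition clock_cmp_args :: "('f, 'o) ttm \<Rightarrow> ('f, 'o) ttm \<Rightarrow> bool" where
  "clock_cmp_args x y \<longleftrightarrow>
     (is_clock_term x \<and> is_nat_const y) \<or> (is_nat_const x \<and> is_clock_term y)
     \<or> (is_nat_const x \<and> is_nat_const y)"

fun time_free_a :: "('a, 'f, 'o) atm \<Rightarrow> bool" where
  "time_free_a (AWait t) = False"
| "time_free_a _ = True"

fun clocked :: "('r, 'f, 'a, 'o) fml \<Rightarrow> bool" where
  "clocked (TEq x y) = clock_cmp_args x y"
| "clocked (TLess x y) = clock_cmp_args x y"
| "clocked (TLeq x y) = clock_cmp_args x y"
| "clocked (AEq x y) = (time_free_a x \<and> time_free_a y)"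
| "clocked (Neg p) = clocked p"
| "clocked (Conj p q) = (clocked p \<and> clocked q)"
| "clocked (ExO i p) = clocked p"
| "clocked (ExA i p) = clocked p"
| "clocked (ExT i p) = clocked p"
| "clocked (OEq x y) = True"
| "clocked (Rel R xs) = True"

fun time_indep :: "('r, 'f, 'a, 'o) fml \<Rightarrow> bool" where
  "time_indep (TEq x y) = False"
| "time_indep (TLess x y) = False"
| "time_indep (TLeq x y) = False"
| "time_indep (AEq x y) = (time_free_a x \<and> time_free_a y)"
| "time_indep (Neg p) = time_indep p"
| "time_indep (Conj p q) = (time_indep p \<and> time_indep q)"
| "time_indep (ExO i p) = time_indep p"
| "time_indep (ExA i p) = time_indep p"
| "time_indep (ExT i p) = False"
| "time_indep (OEq x y) = True"
| "time_indep (Rel R xs) = True"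

text \<open>The domains of objects (the type 'o = the constants O, by unique names and domain
  closure), actions, situations and time (the reals) are the standard ones.\<close>
record ('r, 'f, 'a, 'o) struct =
  rint :: "'r \<Rightarrow> 'o list \<Rightarrow> ('a, 'o) sit \<Rightarrow> bool"
  fint :: "'f \<Rightarrow> 'o list \<Rightarrow> ('a, 'o) sit \<Rightarrow> real"
  possI :: "('a, 'o) action \<Rightarrow> ('a, 'o) sit \<Rightarrow> bool"

fun evo :: "(nat \<Rightarrow> 'o) \<Rightarrow> 'o otm \<Rightarrow> 'o" where
  "evo eo (OV i) = eo i"
| "evo eo (OC c) = c"

fun evt :: "('r, 'f, 'a, 'o, 'z) struct_scheme \<Rightarrow> ('a, 'o) sit \<Rightarrow> (nat \<Rightarrow> 'o)
    \<Rightarrow> (nat \<Rightarrow> real) \<Rightarrow> ('f, 'o) ttm \<Rightarrow> real" where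
  "evt M s eo et (TV i) = et i"
| "evt M s eo et (TNum r) = r"
| "evt M s eo et (TPlus x y) = evt M s eo et x + evt M s eo et y"
| "evt M s eo et (TTimes x y) = evt M s eo et x * evt M s eo et y"
| "evt M s eo et (TUminus x) = - evt M s eo et x"
| "evt M s eo et (TClock f xs) = fint M f (map (evo eo) xs) s"

fun eva :: "('r, 'f, 'a, 'o, 'z) struct_scheme \<Rightarrow> ('a, 'o) sit \<Rightarrow> (nat \<Rightarrow> 'o)
    \<Rightarrow> (nat \<Rightarrow> ('a, 'o) action) \<Rightarrow> (nat \<Rightarrow> real) \<Rightarrow> ('a, 'f, 'o) atm \<Rightarrow> ('a, 'o) action" where
  "eva M s eo ea et (AV i) = ea i"
| "eva M s eo ea et (AAct A xs) = Act A (map (evo eo) xs)"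
| "eva M s eo ea et (AWait t) = Wait (evt M s eo et t)"

fun ev :: "('r, 'f, 'a, 'o, 'y) bat_scheme \<Rightarrow> ('r, 'f, 'a, 'o, 'z) struct_scheme
    \<Rightarrow> ('a, 'o) sit \<Rightarrow> (nat \<Rightarrow> 'o) \<Rightarrow> (nat \<Rightarrow> ('a, 'o) action) \<Rightarrow> (nat \<Rightarrow> real)
    \<Rightarrow> ('r, 'f, 'a, 'o) fml \<Rightarrow> bool" where
  "ev D M s eo ea et (OEq x y) = (evo eo x = evo eo y)"
| "ev D M s eo ea et (AEq x y) = (eva M s eo ea et x = eva M s eo ea et y)"
| "ev D M s eo ea et (TEq x y) = (evt M s eo et x = evt M s eo et y)"
| "ev D M s eo ea et (TLess x y) = (evt M s eo et x < evt M s eo et y)"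
| "ev D M s eo ea et (TLeq x y) = (evt M s eo et x \<le> evt M s eo et y)"
| "ev D M s eo ea et (Rel R xs) = rint M R (map (evo eo) xs) s"
| "ev D M s eo ea et (Neg p) = (\<not> ev D M s eo ea et p)"
| "ev D M s eo ea et (Conj p q) = (ev D M s eo ea et p \<and> ev D M s eo ea et q)"
| "ev D M s eo ea et (ExO i p) = (\<exists>c. ev D M s (eo(i := c)) ea et p)"
| "ev D M s eo ea et (ExA i p) = (\<exists>a. wf_act (aar D) a \<and> ev D M s eo (ea(i := a)) et p)"
| "ev D M s eo ea et (ExT i p) = (\<exists>t. ev D M s eo ea (et(i := t)) p)"

definition sat_D0 :: "('r, 'f, 'a, 'o, 'y) bat_scheme \<Rightarrow> ('r, 'f, 'a, 'o, 'z) struct_scheme \<Rightarrow> bool" where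
  "sat_D0 D M \<longleftrightarrow> (\<forall>\<phi>\<in>D0 D. \<forall>eo ea et. ev D M S0 eo ea et \<phi>)"

text \<open>M is a model of D = D0 \<union> D_poss \<union> D_ssa \<union> D_ca \<union> D_co \<union> Sigma, with the
  successor state axioms of clocks in the clocked format and Poss(wait(t),s) \<equiv> true.\<close>
definition is_model :: "('r, 'f, 'a, 'o, 'y) bat_scheme \<Rightarrow> ('r, 'f, 'a, 'o, 'z) struct_scheme \<Rightarrow> bool" where
  "is_model D M \<longleftrightarrow>
     sat_D0 D M
   \<and> (\<forall>A os s. length os = aar D A \<longrightarrow> wf_sit (aar D) s \<longrightarrow>
        (possI M (Act A os) s \<longleftrightarrow> ev D M s (\<lambda>i. os ! i) (\<lambda>_. Wait 0) (\<lambda>_. 0) (pre D A)))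
   \<and> (\<forall>t s. wf_sit (aar D) s \<longrightarrow> possI M (Wait t) s)
   \<and> (\<forall>R os a s. length os = rar D R \<longrightarrow> wf_act (aar D) a \<longrightarrow> wf_sit (aar D) s \<longrightarrow>
        (rint M R os (Do a s) \<longleftrightarrow> ev D M s (\<lambda>i. os ! i) (\<lambda>_. a) (\<lambda>_. 0) (ssaR D R)))
   \<and> (\<forall>f os a s. length os = far D f \<longrightarrow> wf_act (aar D) a \<longrightarrow> wf_sit (aar D) s \<longrightarrow>
        fint M f os (Do a s) =
          (case a of Wait t \<Rightarrow> fint M f os s + t
           | Act _ _ \<Rightarrow> (if ev D M s (\<lambda>i. os ! i) (\<lambda>_. a) (\<lambda>_. 0) (phiF D f)
                         then 0 else fint M f os s)))"

text \<open>D |= omega[sigma] = tau, for the ground clock term omega = f(os).\<close>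
definition entails_clock :: "('r, 'f, 'a, 'o) bat \<Rightarrow> ('a, 'o) sit \<Rightarrow> 'f \<Rightarrow> 'o list \<Rightarrow> real \<Rightarrow> bool" where
  "entails_clock D \<sigma> f os \<tau> \<longleftrightarrow>
     (\<forall>M :: ('r, 'f, 'a, 'o) struct. is_model D M \<longrightarrow> fint M f os \<sigma> = \<tau>)"

definition clock_terms :: "('r, 'f, 'a, 'o) bat \<Rightarrow> ('f \<times> 'o list) set" where
  "clock_terms D = {(f, os). length os = far D f}"

definition D0_complete :: "('r, 'f, 'a, 'o) bat \<Rightarrow> bool" where
  "D0_complete D \<longleftrightarrow>
     (\<exists>M :: ('r, 'f, 'a, 'o) struct. sat_D0 D M)
   \<and> (\<forall>\<phi>. wf_f D \<phi> \<longrightarrow> fv \<phi> = {} \<longrightarrow>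
        (\<forall>M :: ('r, 'f, 'a, 'o) struct. sat_D0 D M \<longrightarrow> ev D M S0 (\<lambda>_. undefined) (\<lambda>_. Wait 0) (\<lambda>_. 0) \<phi>)
      \<or> (\<forall>M :: ('r, 'f, 'a, 'o) struct. sat_D0 D M \<longrightarrow> \<not> ev D M S0 (\<lambda>_. undefined) (\<lambda>_. Wait 0) (\<lambda>_. 0) \<phi>))"

definition clocked_bat :: "('r, 'f, 'a, 'o) bat \<Rightarrow> bool" where
  "clocked_bat D \<longleftrightarrow>
     (\<forall>\<phi>\<in>D0 D. wf_f D \<phi> \<and> fv \<phi> = {})
   \<and> D0_complete D
   \<and> (\<forall>f os. length os = far D f \<longrightarrow> TEq (TClock f (map OC os)) (TNum 0) \<in> D0 D)
   \<and> (\<forall>f. wf_f D (phiF D f) \<and> fv (phiF D f) \<subseteq> {VO i | i. i < far D f} \<union> {VAc 0}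
          \<and> time_indep (phiF D f))
   \<and> (\<forall>R. wf_f D (ssaR D R) \<and> fv (ssaR D R) \<subseteq> {VO i | i. i < rar D R} \<union> {VAc 0}
          \<and> clocked (ssaR D R))
   \<and> (\<forall>A. wf_f D (pre D A) \<and> fv (pre D A) \<subseteq> {VO i | i. i < aar D A}
          \<and> clocked (pre D A))"

end

theory Submission
  imports Defs
begin

lemma evt_agree:
  "wf_t D t \<Longrightarrow> (\<forall>f os. length os = far D f \<longrightarrow> fint M1 f os s = fint M2 f os s)
   \<Longrightarrow> evt M1 s eo et t = evt M2 s eo et t"
  by (induction t) auto

lemma eva_agree:
  "wf_a D t \<Longrightarrow> (\<forall>f os. length os = far D f \<longrightarrow> fint M1 f os s = fint M2 f os s)
   \<Longrightarrow> eva M1 s eo ea et t = eva M2 s eo ea et t"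
  by (induction t) (auto intro: evt_agree)

lemma ev_agree:
  "wf_f D \<phi> \<Longrightarrow> (\<forall>R os. length os = rar D R \<longrightarrow> rint M1 R os s = rint M2 R os s)
   \<Longrightarrow> (\<forall>f os. length os = far D f \<longrightarrow> fint M1 f os s = fint M2 f os s)
   \<Longrightarrow> ev D M1 s eo ea et \<phi> = ev D M2 s eo ea et \<phi>"
proof (induction \<phi> arbitrary: eo ea et)
  case (AEq x y) then show ?case using eva_agree[of D _ M1 s M2] by simp
next
  case (TEq x y) then show ?case using evt_agree[of D _ M1 s M2] by simp
next
  case (TLess x y) then show ?case using evt_agree[of D _ M1 s M2] by simp
next
  case (TLeq x y) then show ?case using evt_agree[of D _ M1 s M2] by simp
qed auto

definition mk :: "('r \<Rightarrow> 'o list \<Rightarrow> bool) \<times> ('f \<Rightarrow> 'o list \<Rightarrow> real) \<Rightarrow> ('r, 'f, 'a, 'o) struct" where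
  "mk p = (| rint = (\<lambda>R os s. fst p R os), fint = (\<lambda>f os s. snd p f os), possI = (\<lambda>a s. True) |)"

primrec st :: "('r, 'f, 'a, 'o) bat \<Rightarrow> ('r, 'f, 'a, 'o) struct \<Rightarrow> ('a, 'o) sit
   \<Rightarrow> ('r \<Rightarrow> 'o list \<Rightarrow> bool) \<times> ('f \<Rightarrow> 'o list \<Rightarrow> real)" where
  "st D M0 S0 = (\<lambda>R os. rint M0 R os S0, \<lambda>f os. fint M0 f os S0)"
| "st D M0 (Do a s) =
    (\<lambda>R os. ev D (mk (st D M0 s) :: ('r, 'f, 'a, 'o) struct) s (\<lambda>i. os ! i) (\<lambda>_. a) (\<lambda>_. 0) (ssaR D R),
     \<lambda>f os. (case a of Wait t \<Rightarrow> snd (st D M0 s) f os + t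
        | Act _ _ \<Rightarrow> (if ev D (mk (st D M0 s) :: ('r, 'f, 'a, 'o) struct) s (\<lambda>i. os ! i) (\<lambda>_. a) (\<lambda>_. 0) (phiF D f)
                      then 0 else snd (st D M0 s) f os)))"

definition bigM :: "('r, 'f, 'a, 'o) bat \<Rightarrow> ('r, 'f, 'a, 'o) struct \<Rightarrow> ('r, 'f, 'a, 'o) struct" where
  "bigM D M0 = (| rint = (\<lambda>R os s. fst (st D M0 s) R os), fint = (\<lambda>f os s. snd (st D M0 s) f os),
      possI = (\<lambda>a s. case a of Wait t \<Rightarrow> True
         | Act A os \<Rightarrow> ev D (mk (st D M0 s) :: ('r, 'f, 'a, 'o) struct) s (\<lambda>i. os ! i) (\<lambda>_. Wait 0) (\<lambda>_. 0) (pre D A)) |)"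

lemma ev_mk:
  "wf_f D \<phi> \<Longrightarrow> ev D (mk (st D M0 s) :: ('r, 'f, 'a, 'o) struct) s eo ea et \<phi> = ev D (bigM D M0) s eo ea et \<phi>"
  by (rule ev_agree) (auto simp: mk_def bigM_def)

lemma model_exists:
  fixes D :: "('r, 'f, 'a, 'o) bat"
  assumes "clocked_bat D"
  shows "\<exists>M :: ('r, 'f, 'a, 'o) struct. is_model D M"
proof -
  from assms obtain M0 :: "('r, 'f, 'a, 'o) struct" where M0: "sat_D0 D M0"
    unfolding clocked_bat_def D0_complete_def by blast
  have wfs: "\<And>\<phi>. \<phi> \<in> D0 D \<Longrightarrow> wf_f D \<phi>" "\<And>A. wf_f D (pre D A)" "\<And>R. wf_f D (ssaR D R)"
    "\<And>f. wf_f D (phiF D f)" using assms unfolding clocked_bat_def by auto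
  have "sat_D0 D (bigM D M0)"
    unfolding sat_D0_def
  proof (intro ballI allI)
    fix \<phi> eo ea et assume "\<phi> \<in> D0 D"
    then have "ev D M0 S0 eo ea et \<phi>" using M0 unfolding sat_D0_def by blast
    moreover have "ev D M0 S0 eo ea et \<phi> = ev D (bigM D M0) S0 eo ea et \<phi>"
      by (rule ev_agree[OF wfs(1)[OF \<open>\<phi> \<in> D0 D\<close>]]) (auto simp: bigM_def)
    ultimately show "ev D (bigM D M0) S0 eo ea et \<phi>" by simp
  qed
  moreover have "possI (bigM D M0) (Act A os) s = ev D (bigM D M0) s (\<lambda>i. os ! i) (\<lambda>_. Wait 0) (\<lambda>_. 0) (pre D A)" for A os s
    using ev_mk[OF wfs(2)] by (simp add: bigM_def)
  moreover have "rint (bigM D M0) R os (Do a s) = ev D (bigM D M0) s (\<lambda>i. os ! i) (\<lambda>_. a) (\<lambda>_. 0) (ssaR D R)" for R os a s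
    using ev_mk[OF wfs(3)] by (simp add: bigM_def)
  moreover have "fint (bigM D M0) f os (Do a s) =
          (case a of Wait t \<Rightarrow> fint (bigM D M0) f os s + t
           | Act _ _ \<Rightarrow> (if ev D (bigM D M0) s (\<lambda>i. os ! i) (\<lambda>_. a) (\<lambda>_. 0) (phiF D f)
                         then 0 else fint (bigM D M0) f os s))" for f os a s
    using ev_mk[OF wfs(4)] by (simp add: bigM_def split: action.split)
  moreover have "possI (bigM D M0) (Wait t) s" for t s by (simp add: bigM_def)
  ultimately show ?thesis unfolding is_model_def by blast
qed

lemma models_agree:
  fixes D :: "('r, 'f, 'a, 'o) bat" and M1 M2 :: "('r, 'f, 'a, 'o) struct"
  assumes cb: "clocked_bat D" and m1: "is_model D M1" and m2: "is_model D M2"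
  shows "wf_sit (aar D) s \<Longrightarrow> (\<forall>R os. length os = rar D R \<longrightarrow> rint M1 R os s = rint M2 R os s)
     \<and> (\<forall>f os. length os = far D f \<longrightarrow> fint M1 f os s = fint M2 f os s)"
proof (induction s)
  case S0
  have s1: "sat_D0 D M1" and s2: "sat_D0 D M2" using m1 m2 unfolding is_model_def by auto
  have c: "D0_complete D" using cb unfolding clocked_bat_def by auto
  have r: "rint M1 R os S0 = rint M2 R os S0" if "length os = rar D R" for R os
  proof -
    let ?p = "Rel R (map OC os) :: ('r, 'f, 'a, 'o) fml"
    have "wf_f D ?p" "fv ?p = {}" using that by auto
    then have "(\<forall>M :: ('r, 'f, 'a, 'o) struct. sat_D0 D M \<longrightarrow> ev D M S0 (\<lambda>_. undefined) (\<lambda>_. Wait 0) (\<lambda>_. 0) ?p)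
      \<or> (\<forall>M :: ('r, 'f, 'a, 'o) struct. sat_D0 D M \<longrightarrow> \<not> ev D M S0 (\<lambda>_. undefined) (\<lambda>_. Wait 0) (\<lambda>_. 0) ?p)"
      using c unfolding D0_complete_def by blast
    then show ?thesis using s1 s2 by (auto simp: comp_def)
  qed
  have f: "fint M f os S0 = 0" if "length os = far D f" "sat_D0 D M" for f os and M :: "('r, 'f, 'a, 'o) struct"
  proof -
    have "TEq (TClock f (map OC os)) (TNum 0) \<in> D0 D" using cb that unfolding clocked_bat_def by auto
    then have "ev D M S0 (\<lambda>_. undefined) (\<lambda>_. Wait 0) (\<lambda>_. 0) (TEq (TClock f (map OC os)) (TNum 0))"
      using that(2) unfolding sat_D0_def by blast
    then show ?thesis by (simp add: comp_def)
  qed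
  show ?case using r f s1 s2 by auto
next
  case (Do a s)
  then have wa: "wf_act (aar D) a" and ws: "wf_sit (aar D) s" by auto
  have IH: "\<forall>R os. length os = rar D R \<longrightarrow> rint M1 R os s = rint M2 R os s"
    "\<forall>f os. length os = far D f \<longrightarrow> fint M1 f os s = fint M2 f os s" using Do ws by auto
  have wfs: "\<And>R. wf_f D (ssaR D R)" "\<And>f. wf_f D (phiF D f)" using cb unfolding clocked_bat_def by auto
  have "rint M1 R os (Do a s) = rint M2 R os (Do a s)" if "length os = rar D R" for R os
    using m1 m2 that wa ws ev_agree[OF wfs(1) IH] unfolding is_model_def by metis
  moreover have "fint M1 f os (Do a s) = fint M2 f os (Do a s)" if "length os = far D f" for f os
  proof -
    have e1: "fint M1 f os (Do a s) = (case a of Wait t \<Rightarrow> fint M1 f os s + t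
           | Act _ _ \<Rightarrow> (if ev D M1 s (\<lambda>i. os ! i) (\<lambda>_. a) (\<lambda>_. 0) (phiF D f)
                         then 0 else fint M1 f os s))" using m1 that wa ws unfolding is_model_def by blast
    have e2: "fint M2 f os (Do a s) = (case a of Wait t \<Rightarrow> fint M2 f os s + t
           | Act _ _ \<Rightarrow> (if ev D M2 s (\<lambda>i. os ! i) (\<lambda>_. a) (\<lambda>_. 0) (phiF D f)
                         then 0 else fint M2 f os s))" using m2 that wa ws unfolding is_model_def by blast
    show ?thesis unfolding e1 e2 using ev_agree[OF wfs(2) IH] IH(2) that
      by (simp split: action.split)
  qed
  ultimately show ?case by blast
qed

theorem lemma1:
  fixes D :: "('r::finite, 'f::finite, 'a::finite, 'o::finite) bat"
    and \<sigma> :: "('a, 'o) sit"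
  assumes "clocked_bat D"
    and "wf_sit (aar D) \<sigma>"
  shows "\<forall>(f, os) \<in> clock_terms D. \<exists>!\<tau>::real. entails_clock D \<sigma> f os \<tau>"
proof (clarify)
  fix f os assume "(f, os) \<in> clock_terms D"
  then have l: "length os = far D f" by (simp add: clock_terms_def)
  obtain M :: "('r, 'f, 'a, 'o) struct" where M: "is_model D M" using model_exists[OF assms(1)] by blast
  have "entails_clock D \<sigma> f os (fint M f os \<sigma>)"
    unfolding entails_clock_def using models_agree[OF assms(1) _ M, OF _ assms(2)] l by metis
  moreover have "\<tau> = fint M f os \<sigma>" if "entails_clock D \<sigma> f os \<tau>" for \<tau>
    using that M unfolding entails_clock_def by metis
  ultimately show "\<exists>!\<tau>::real. entails_clock D \<sigma> f os \<tau>" by blast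
qed

end
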